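(* Let $\{X_k(m): m\in\mathbb{R}_+,\ k\in\mathbb{N}\}$ be a family of integrable real random variables, independent in $k$, satisfying (C) $\mathbb{E}[X_k(m)]=0$ for all $m,k$; (W1) for every $\varepsilon>0$, $\lim_{m\to\infty}\sup_k\mathbb P(|X_k(m)|>\varepsilon)=0$; (W2) $\lim_{A\to\infty}\sup_{k,m}\mathbb E\big[|X_k(m)|\mathbf 1_{\{|X_k(m)|>A\}}\big]=0$. Let $(m_k)_{k\in\mathbb N}$ be positive reals with $\sum_k m_k=\infty$, $M_n=\sum_{k=1}^n m_k$, fix $K>0$, and for $1\le k\le n$ let $Y_k(m_k)=X_k(m_k)\mathbf 1_{\{|X_k(m_k)|<M_n/m_k\}}\mathbf 1_{\{m_k<K\}}$ (depending on $n$). Then $\lim_{n\to\infty}\max_{1\le k\le n}\frac{M_n}{m_k}\mathbb P\big(|X_k(m_k)|\mathbf 1_{\{m_k<K\}}\ge \tfrac{M_n}{m_k}\big)=0$ and $\lim_{n\to\infty}\max_{1\le k\le n}\frac{m_k}{M_n}\mathbb E[Y_k(m_k)^2]=0.$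
   Context: "Independent in $k$" means the families $\{X_k(m):m\in\mathbb R_+\}$ for different $k$ are independent. *)

theory Defs
  imports "HOL-Probability.Probability"
begin

end

theory Submission
  imports Defs
begin

lemma key1:
  fixes f :: "'a \<Rightarrow> real"
  assumes P: "prob_space M" and f: "integrable M f" and Aa: "A < a" and a: "0 < a"
  shows "a * measure M {\<omega>\<in>space M. a \<le> \<bar>f \<omega>\<bar>}
          \<le> integral\<^sup>L M (\<lambda>\<omega>. \<bar>f \<omega>\<bar> * indicator {\<omega>. \<bar>f \<omega>\<bar> > A} \<omega>)"
proof -
  interpret prob_space M by (rule P)
  have fm: "f \<in> borel_measurable M" using f by auto
  define S where "S = {\<omega>\<in>space M. a \<le> \<bar>f \<omega>\<bar>}"
  have Sm: "S \<in> sets M" unfolding S_def using fm by measurable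
  have "a * measure M S = integral\<^sup>L M (\<lambda>\<omega>. a * indicator S \<omega>)"
    using Sm by simp
  also have "\<dots> \<le> integral\<^sup>L M (\<lambda>\<omega>. \<bar>f \<omega>\<bar> * indicator {\<omega>. \<bar>f \<omega>\<bar> > A} \<omega>)"
  proof (rule integral_mono)
    show "integrable M (\<lambda>\<omega>. a * indicator S \<omega>)" using Sm
      by (intro integrable_mult_right integrable_indicator) (auto simp: emeasure_eq_measure)
    have m2: "(\<lambda>\<omega>. \<bar>f \<omega>\<bar> * indicator {\<omega>. \<bar>f \<omega>\<bar> > A} \<omega>) \<in> borel_measurable M"
    using fm by measurable
    show "integrable M (\<lambda>\<omega>. \<bar>f \<omega>\<bar> * indicator {\<omega>. \<bar>f \<omega>\<bar> > A} \<omega>)"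
      apply (rule Bochner_Integration.integrable_bound[OF integrable_abs[OF f] m2])
      by (auto simp: indicator_def)
    fix \<omega> assume "\<omega> \<in> space M"
    then show "a * indicator S \<omega> \<le> \<bar>f \<omega>\<bar> * indicator {\<omega>. \<bar>f \<omega>\<bar> > A} \<omega>"
      using Aa a by (auto simp: S_def indicator_def)
  qed
  finally show ?thesis unfolding S_def .
qed

lemma key2:
  fixes f :: "'a \<Rightarrow> real"
  assumes P: "prob_space M" and f: "integrable M f" and B: "0 \<le> B" and a: "0 < a"
  shows "integral\<^sup>L M (\<lambda>\<omega>. (f \<omega> * indicator {\<omega>. \<bar>f \<omega>\<bar> < a} \<omega>)\<^sup>2)
          \<le> B\<^sup>2 + a * integral\<^sup>L M (\<lambda>\<omega>. \<bar>f \<omega>\<bar> * indicator {\<omega>. \<bar>f \<omega>\<bar> > B} \<omega>)"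
proof -
  interpret prob_space M by (rule P)
  have fm: "f \<in> borel_measurable M" using f by auto
  have m2: "(\<lambda>\<omega>. \<bar>f \<omega>\<bar> * indicator {\<omega>. \<bar>f \<omega>\<bar> > B} \<omega>) \<in> borel_measurable M"
  using fm by measurable
  have i2: "integrable M (\<lambda>\<omega>. \<bar>f \<omega>\<bar> * indicator {\<omega>. \<bar>f \<omega>\<bar> > B} \<omega>)"
    apply (rule Bochner_Integration.integrable_bound[OF integrable_abs[OF f] m2])
    by (auto simp: indicator_def)
  have m1: "(\<lambda>\<omega>. (f \<omega> * indicator {\<omega>. \<bar>f \<omega>\<bar> < a} \<omega>)\<^sup>2) \<in> borel_measurable M"
  using fm by measurable
  have i1: "integrable M (\<lambda>\<omega>. (f \<omega> * indicator {\<omega>. \<bar>f \<omega>\<bar> < a} \<omega>)\<^sup>2)"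
  proof (rule Bochner_Integration.integrable_bound[OF integrable_mult_right[OF integrable_abs[OF f], of a] m1])
    show "AE x in M. norm ((f x * indicator {\<omega>. \<bar>f \<omega>\<bar> < a} x)\<^sup>2) \<le> norm (a * \<bar>f x\<bar>)"
    proof (intro AE_I2)
      fix x
      show "norm ((f x * indicator {\<omega>. \<bar>f \<omega>\<bar> < a} x)\<^sup>2) \<le> norm (a * \<bar>f x\<bar>)"
      proof (cases "\<bar>f x\<bar> < a")
        case True
        have "\<bar>f x\<bar> * \<bar>f x\<bar> \<le> a * \<bar>f x\<bar>" using True by (intro mult_right_mono) auto
        then show ?thesis using True a by (simp add: indicator_def power2_eq_square abs_mult)
      qed (auto simp: indicator_def)
    qed
  qed
  have "integral\<^sup>L M (\<lambda>\<omega>. (f \<omega> * indicator {\<omega>. \<bar>f \<omega>\<bar> < a} \<omega>)\<^sup>2)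
      \<le> integral\<^sup>L M (\<lambda>\<omega>. B\<^sup>2 + a * (\<bar>f \<omega>\<bar> * indicator {\<omega>. \<bar>f \<omega>\<bar> > B} \<omega>))"
  proof (rule integral_mono[OF i1])
    show "integrable M (\<lambda>\<omega>. B\<^sup>2 + a * (\<bar>f \<omega>\<bar> * indicator {\<omega>. \<bar>f \<omega>\<bar> > B} \<omega>))"
      using i2 by (intro Bochner_Integration.integrable_add integrable_mult_right) auto
    fix x
    show "(f x * indicator {\<omega>. \<bar>f \<omega>\<bar> < a} x)\<^sup>2 \<le> B\<^sup>2 + a * (\<bar>f x\<bar> * indicator {\<omega>. \<bar>f \<omega>\<bar> > B} x)"
    proof (cases "\<bar>f x\<bar> < a")
      case True
      show ?thesis
      proof (cases "\<bar>f x\<bar> > B")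
        case True2: True
        have "\<bar>f x\<bar> * \<bar>f x\<bar> \<le> a * \<bar>f x\<bar>" using True by (intro mult_right_mono) auto
        moreover have "(f x * indicator {\<omega>. \<bar>f \<omega>\<bar> < a} x)\<^sup>2 = \<bar>f x\<bar> * \<bar>f x\<bar>"
          using True by (simp add: indicator_def power2_eq_square)
        moreover have "indicator {\<omega>. \<bar>f \<omega>\<bar> > B} x = (1::real)" using True2 by simp
        moreover have "0 \<le> B\<^sup>2" by simp
        ultimately show ?thesis by (simp only:)
      next
        case False
        have "\<bar>f x\<bar> * \<bar>f x\<bar> \<le> B * B" using False by (intro mult_mono) auto
        then show ?thesis using True False a B
          by (simp add: indicator_def power2_eq_square abs_mult)
      qed
    next
      case False
      then show ?thesis using a by (auto simp: indicator_def)
    qed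
  qed
  also have "\<dots> = B\<^sup>2 + a * integral\<^sup>L M (\<lambda>\<omega>. \<bar>f \<omega>\<bar> * indicator {\<omega>. \<bar>f \<omega>\<bar> > B} \<omega>)"
    using i2 by (subst Bochner_Integration.integral_add) (auto simp: prob_space)
  finally show ?thesis .
qed

theorem lemma5p1:
  fixes M :: "'a measure"
    and X :: "nat \<Rightarrow> real \<Rightarrow> 'a \<Rightarrow> real"
    and m :: "nat \<Rightarrow> real"
    and K :: real
    and Mn :: "nat \<Rightarrow> real"
    and Y :: "nat \<Rightarrow> nat \<Rightarrow> 'a \<Rightarrow> real"
  assumes P: "prob_space M"
    and integ: "\<And>k t. k \<ge> 1 \<Longrightarrow> t \<ge> 0 \<Longrightarrow> integrable M (X k t)"
    and indep: "prob_space.indep_vars M (\<lambda>_. Pi\<^sub>M {0..} (\<lambda>_. borel))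
                  (\<lambda>k \<omega>. \<lambda>t\<in>{0..}. X k t \<omega>) {1..}"
    and C: "\<And>k t. k \<ge> 1 \<Longrightarrow> t \<ge> 0 \<Longrightarrow> integral\<^sup>L M (X k t) = 0"
    and W1: "\<And>\<epsilon>. \<epsilon> > 0 \<Longrightarrow>
              ((\<lambda>t. SUP k\<in>{1..}. ereal (measure M {\<omega>\<in>space M. \<bar>X k t \<omega>\<bar> > \<epsilon>}))
                 \<longlongrightarrow> 0) at_top"
    and W2: "((\<lambda>A. SUP (k, t)\<in>{1..} \<times> {0..}.
                 ereal (integral\<^sup>L M (\<lambda>\<omega>. \<bar>X k t \<omega>\<bar> * indicator {\<omega>. \<bar>X k t \<omega>\<bar> > A} \<omega>)))
                 \<longlongrightarrow> 0) at_top"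
    and mpos: "\<And>k. k \<ge> 1 \<Longrightarrow> m k > 0"
    and mdiv: "filterlim (\<lambda>n. \<Sum>k=1..n. m k) at_top at_top"
    and Kpos: "K > 0"
    and Mn_def: "Mn = (\<lambda>n. \<Sum>k=1..n. m k)"
    and Y_def: "Y = (\<lambda>n k \<omega>. X k (m k) \<omega> * indicator {\<omega>. \<bar>X k (m k) \<omega>\<bar> < Mn n / m k} \<omega>
                        * (if m k < K then 1 else 0))"
  shows "((\<lambda>n. Max ((\<lambda>k. Mn n / m k *
            measure M {\<omega>\<in>space M. \<bar>X k (m k) \<omega>\<bar> * (if m k < K then 1 else 0) \<ge> Mn n / m k})
            ` {1..n})) \<longlonglongrightarrow> 0) \<and>
         ((\<lambda>n. Max ((\<lambda>k. m k / Mn n * integral\<^sup>L M (\<lambda>\<omega>. (Y n k \<omega>)\<^sup>2)) ` {1..n}))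
            \<longlonglongrightarrow> 0)"
proof -
  have UI: "\<exists>A0. \<forall>A\<ge>A0. \<forall>k\<ge>1. \<forall>t\<ge>0.
      integral\<^sup>L M (\<lambda>\<omega>. \<bar>X k t \<omega>\<bar> * indicator {\<omega>. \<bar>X k t \<omega>\<bar> > A} \<omega>) < e" if e: "e > 0" for e
  proof -
    have "eventually (\<lambda>A. (SUP (k, t)\<in>{1..} \<times> {0..}.
                 ereal (integral\<^sup>L M (\<lambda>\<omega>. \<bar>X k t \<omega>\<bar> * indicator {\<omega>. \<bar>X k t \<omega>\<bar> > A} \<omega>))) < ereal e) at_top"
      using order_tendstoD(2)[OF W2] e by simp
    then obtain A0 where A0: "\<And>A. A \<ge> A0 \<Longrightarrow> (SUP (k, t)\<in>{1..} \<times> {0..}.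
                 ereal (integral\<^sup>L M (\<lambda>\<omega>. \<bar>X k t \<omega>\<bar> * indicator {\<omega>. \<bar>X k t \<omega>\<bar> > A} \<omega>))) < ereal e"
      unfolding eventually_at_top_linorder by blast
    show ?thesis
    proof (intro exI[of _ A0] allI impI)
      fix A k t assume "A \<ge> A0" "(k::nat) \<ge> 1" "(t::real) \<ge> 0"
      then have "ereal (integral\<^sup>L M (\<lambda>\<omega>. \<bar>X k t \<omega>\<bar> * indicator {\<omega>. \<bar>X k t \<omega>\<bar> > A} \<omega>))
         \<le> (SUP (k, t)\<in>{1..} \<times> {0..}.
                 ereal (integral\<^sup>L M (\<lambda>\<omega>. \<bar>X k t \<omega>\<bar> * indicator {\<omega>. \<bar>X k t \<omega>\<bar> > A} \<omega>)))"
        by (intro SUP_upper2[of "(k,t)"]) auto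
      from le_less_trans[OF this A0[OF \<open>A \<ge> A0\<close>]]
      show "integral\<^sup>L M (\<lambda>\<omega>. \<bar>X k t \<omega>\<bar> * indicator {\<omega>. \<bar>X k t \<omega>\<bar> > A} \<omega>) < e"
        by simp
    qed
  qed
  have Mlarge: "\<exists>N. \<forall>n\<ge>N. Mn n \<ge> Z" for Z
  proof -
    have "eventually (\<lambda>n. (\<Sum>k=1..n. m k) \<ge> Z) sequentially"
      using mdiv unfolding filterlim_at_top by blast
    then show ?thesis unfolding eventually_sequentially Mn_def by blast
  qed
  show ?thesis
  proof
    show "(\<lambda>n. Max ((\<lambda>k. Mn n / m k *
            measure M {\<omega>\<in>space M. \<bar>X k (m k) \<omega>\<bar> * (if m k < K then 1 else 0) \<ge> Mn n / m k})
            ` {1..n})) \<longlonglongrightarrow> 0"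
    proof (rule LIMSEQ_I)
      fix r :: real assume r: "r > 0"
      obtain A0 where A0: "\<And>A k t. A \<ge> A0 \<Longrightarrow> k \<ge> 1 \<Longrightarrow> t \<ge> 0 \<Longrightarrow>
         integral\<^sup>L M (\<lambda>\<omega>. \<bar>X k t \<omega>\<bar> * indicator {\<omega>. \<bar>X k t \<omega>\<bar> > A} \<omega>) < r"
        using UI[OF r] by blast
      define A where "A = max A0 1"
      obtain N where N: "\<And>n. n \<ge> N \<Longrightarrow> Mn n \<ge> 2 * K * A" using Mlarge by blast
      show "\<exists>no. \<forall>n\<ge>no. norm (Max ((\<lambda>k. Mn n / m k *
            measure M {\<omega>\<in>space M. \<bar>X k (m k) \<omega>\<bar> * (if m k < K then 1 else 0) \<ge> Mn n / m k})
            ` {1..n}) - 0) < r"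
      proof (intro exI[of _ "max N 1"] allI impI)
        fix n assume n: "max N 1 \<le> n"
        have MnA: "Mn n \<ge> 2 * K * A" using N n by auto
        have A1: "A \<ge> 1" "A \<ge> A0" unfolding A_def by auto
        have Mpos: "Mn n > 0" using MnA A1 Kpos
          by (smt (verit) mult_le_cancel_left1 mult_pos_pos)
        let ?S = "(\<lambda>k. Mn n / m k *
            measure M {\<omega>\<in>space M. \<bar>X k (m k) \<omega>\<bar> * (if m k < K then 1 else 0) \<ge> Mn n / m k}) ` {1..n}"
        have "Max ?S \<in> ?S" using n by (intro Max_in) auto
        then obtain k where k: "k \<in> {1..n}" and kM: "Max ?S = Mn n / m k *
            measure M {\<omega>\<in>space M. \<bar>X k (m k) \<omega>\<bar> * (if m k < K then 1 else 0) \<ge> Mn n / m k}"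
          by auto
        have mk: "m k > 0" using mpos k by auto
        have apos: "Mn n / m k > 0" using Mpos mk by simp
        have "\<bar>Mn n / m k *
            measure M {\<omega>\<in>space M. \<bar>X k (m k) \<omega>\<bar> * (if m k < K then 1 else 0) \<ge> Mn n / m k}\<bar> < r"
        proof (cases "m k < K")
          case True
          have "Mn n / K < Mn n / m k" using True mk Mpos by (intro divide_strict_left_mono) auto
          moreover have "Mn n / K \<ge> 2 * A" using MnA Kpos by (simp add: field_simps)
          ultimately have Aa: "A < Mn n / m k" using A1 by linarith
          have "Mn n / m k * measure M {\<omega>\<in>space M. Mn n / m k \<le> \<bar>X k (m k) \<omega>\<bar>}
              \<le> integral\<^sup>L M (\<lambda>\<omega>. \<bar>X k (m k) \<omega>\<bar> * indicator {\<omega>. \<bar>X k (m k) \<omega>\<bar> > A} \<omega>)"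
            by (rule key1[OF P integ Aa apos]) (use k mk in auto)
          also have "\<dots> < r" using A0[OF A1(2), of k "m k"] k mk by auto
          finally show ?thesis using True apos abs_of_pos[OF Mpos] abs_of_pos[OF mk] by (simp add: abs_mult)
        next
          case False
          then show ?thesis using apos r by simp
        qed
        then show "norm (Max ?S - 0) < r" using kM by simp
      qed
    qed
  next
    show "(\<lambda>n. Max ((\<lambda>k. m k / Mn n * integral\<^sup>L M (\<lambda>\<omega>. (Y n k \<omega>)\<^sup>2)) ` {1..n})) \<longlonglongrightarrow> 0"
    proof (rule LIMSEQ_I)
      fix r :: real assume r: "r > 0"
      obtain B0 where B0: "\<And>A k t. A \<ge> B0 \<Longrightarrow> k \<ge> 1 \<Longrightarrow> t \<ge> 0 \<Longrightarrow>
         integral\<^sup>L M (\<lambda>\<omega>. \<bar>X k t \<omega>\<bar> * indicator {\<omega>. \<bar>X k t \<omega>\<bar> > A} \<omega>) < r / 2"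
        using UI[of "r/2"] r by auto
      define B where "B = max B0 0"
      obtain N where N: "\<And>n. n \<ge> N \<Longrightarrow> Mn n \<ge> K * (2 * B\<^sup>2 / r + 1)" using Mlarge by blast
      show "\<exists>no. \<forall>n\<ge>no. norm (Max ((\<lambda>k. m k / Mn n * integral\<^sup>L M (\<lambda>\<omega>. (Y n k \<omega>)\<^sup>2)) ` {1..n}) - 0) < r"
      proof (intro exI[of _ "max N 1"] allI impI)
        fix n assume n: "max N 1 \<le> n"
        have B1: "B \<ge> 0" "B \<ge> B0" unfolding B_def by auto
        have MnB: "Mn n \<ge> K * (2 * B\<^sup>2 / r + 1)" using N n by auto
        have Mpos: "Mn n > 0"
        proof -
          have "2 * B\<^sup>2 / r + 1 > 0" using r by (simp add: add_nonneg_pos)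
          then show ?thesis using MnB Kpos by (smt (verit) mult_pos_pos)
        qed
        let ?S = "(\<lambda>k. m k / Mn n * integral\<^sup>L M (\<lambda>\<omega>. (Y n k \<omega>)\<^sup>2)) ` {1..n}"
        have "Max ?S \<in> ?S" using n by (intro Max_in) auto
        then obtain k where k: "k \<in> {1..n}" and kM: "Max ?S = m k / Mn n * integral\<^sup>L M (\<lambda>\<omega>. (Y n k \<omega>)\<^sup>2)"
          by auto
        have mk: "m k > 0" using mpos k by auto
        define a where "a = Mn n / m k"
        have apos: "a > 0" using Mpos mk by (simp add: a_def)
        have "\<bar>m k / Mn n * integral\<^sup>L M (\<lambda>\<omega>. (Y n k \<omega>)\<^sup>2)\<bar> < r"
        proof (cases "m k < K")
          case True
          have Yk: "(\<lambda>\<omega>. (Y n k \<omega>)\<^sup>2) = (\<lambda>\<omega>. (X k (m k) \<omega> * indicator {\<omega>. \<bar>X k (m k) \<omega>\<bar> < a} \<omega>)\<^sup>2)"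
            using True by (simp add: Y_def a_def)
          have nn: "0 \<le> integral\<^sup>L M (\<lambda>\<omega>. (Y n k \<omega>)\<^sup>2)" by (intro integral_nonneg_AE) auto
          have "Mn n / K < a" using True mk Mpos unfolding a_def by (intro divide_strict_left_mono) auto
          moreover have "Mn n / K \<ge> 2 * B\<^sup>2 / r + 1" using MnB Kpos by (simp add: field_simps)
          ultimately have a2: "a > 2 * B\<^sup>2 / r" by linarith
          have "integral\<^sup>L M (\<lambda>\<omega>. (Y n k \<omega>)\<^sup>2)
              \<le> B\<^sup>2 + a * integral\<^sup>L M (\<lambda>\<omega>. \<bar>X k (m k) \<omega>\<bar> * indicator {\<omega>. \<bar>X k (m k) \<omega>\<bar> > B} \<omega>)"
            unfolding Yk by (rule key2[OF P integ B1(1) apos]) (use k mk in auto)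
          also have "\<dots> < B\<^sup>2 + a * (r/2)"
            using B0[OF B1(2), of k "m k"] k mk apos by auto
          finally have lt: "integral\<^sup>L M (\<lambda>\<omega>. (Y n k \<omega>)\<^sup>2) < B\<^sup>2 + a * (r/2)" .
          have "B\<^sup>2 < a * (r/2)" using a2 r by (simp add: field_simps)
          with lt have "integral\<^sup>L M (\<lambda>\<omega>. (Y n k \<omega>)\<^sup>2) < a * r" by linarith
          then have "integral\<^sup>L M (\<lambda>\<omega>. (Y n k \<omega>)\<^sup>2) / a < r" using apos by (simp add: field_simps)
          moreover have "m k / Mn n * integral\<^sup>L M (\<lambda>\<omega>. (Y n k \<omega>)\<^sup>2) = integral\<^sup>L M (\<lambda>\<omega>. (Y n k \<omega>)\<^sup>2) / a"
            unfolding a_def by simp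
          ultimately show ?thesis using nn mk Mpos abs_of_pos[OF apos] by simp
        next
          case False
          then have "(\<lambda>\<omega>. (Y n k \<omega>)\<^sup>2) = (\<lambda>\<omega>. 0)" by (simp add: Y_def)
          then show ?thesis using r by simp
        qed
        then show "norm (Max ?S - 0) < r" using kM by simp
      qed
    qed
  qed
qed

end
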